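(* Let $n\ge2$. Let $a,b>0$ and let $f:[-a,b]\to[0,\infty)$ be continuous, strictly positive on $(-a,b)$, such that $h:=f^{1/(n-1)}$ is concave on $[-a,b]$ and $\int_{-a}^b t f(t)\,dt=0$. Then $$\frac{\int_0^b f(t)\,dt}{\int_{-a}^0 f(t)\,dt}\le\Big(1+\frac1n\Big)^n-1,$$ with equality if and only if $h$ is affine on $[-a,b]$ and $h(-a)=0$. *)

theory Defs
  imports "HOL-Analysis.Analysis"
begin

end

theory Submission
  imports Defs
begin

lemma zero_lemma:
  fixes u :: "real \<Rightarrow> real"
  assumes "p < q" "continuous_on {p..q} u" "\<And>t. t \<in> {p..q} \<Longrightarrow> 0 \<le> u t"
    "(u has_integral 0) {p..q}" "t \<in> {p..q}"
  shows "u t = 0"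
  using has_integral_0_cbox_imp_0[of p q u t] assms by auto

lemma intp:
  fixes p q c :: real
  assumes "p \<le> q"
  shows "((\<lambda>t. (t+c)^m) has_integral (((q+c)^Suc m - (p+c)^Suc m)/ real (Suc m))) {p..q}"
proof -
  have d: "((\<lambda>x. (x+c)^Suc m / real (Suc m)) has_real_derivative (x+c)^m) (at x within S)" for x S
    by (rule derivative_eq_intros refl | simp)+ 
  have "((\<lambda>t. (t+c)^m) has_integral ((\<lambda>x. (x+c)^Suc m / real (Suc m)) q - (\<lambda>x. (x+c)^Suc m / real (Suc m)) p)) {p..q}"
    apply (rule fundamental_theorem_of_calculus[OF assms])
    unfolding has_real_derivative_iff_has_vector_derivative[symmetric] by (rule d)
  then show ?thesis by (simp add: diff_divide_distrib)
qed

lemma intpt: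
  fixes p q c :: real
  assumes "p \<le> q"
  shows "((\<lambda>t. t*(t+c)^m) has_integral
     (((q+c)^Suc (Suc m)/real (Suc (Suc m)) - c*(q+c)^Suc m/real (Suc m)) -
      ((p+c)^Suc (Suc m)/real (Suc (Suc m)) - c*(p+c)^Suc m/real (Suc m)))) {p..q}"
proof -
  have e: "t*(t+c)^m = (t+c)^Suc m - c * (t+c)^m" for t by (simp add: algebra_simps)
  have d: "((\<lambda>x. (x+c)^Suc (Suc m)/real (Suc (Suc m)) - c*(x+c)^Suc m/real (Suc m)) has_real_derivative (x+c)^Suc m - c * (x+c)^m) (at x within S)" for x S
    by (rule derivative_eq_intros refl | simp)+ 
  show ?thesis unfolding e
    apply (rule fundamental_theorem_of_calculus[OF assms])
    unfolding has_real_derivative_iff_has_vector_derivative[symmetric] by (rule d)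
qed

lemma conc_aff:
  fixes h :: "real \<Rightarrow> real"
  assumes "concave_on S h" "x \<in> S" "y \<in> S" "x \<le> t" "t \<le> y" "x < y"
  shows "(y - x) * (h t - (A*t+B)) \<ge> (y-t)*(h x - (A*x+B)) + (t-x)*(h y - (A*y+B))"
proof -
  define u where "u = (t-x)/(y-x)"
  have u: "0 \<le> u" "u \<le> 1" using assms by (auto simp: u_def field_simps)
  have ux: "u * (y - x) = t - x" using assms by (simp add: u_def)
  have tu: "(1-u) *\<^sub>R x + u *\<^sub>R y = t"
  proof -
    have "(1-u) * x + u * y = x + u * (y - x)" by (simp add: algebra_simps)
    then show ?thesis using ux by simp
  qed
  have "h t \<ge> (1-u) * h x + u * h y"
    using concave_onD[OF assms(1) u assms(2,3)] tu by simp
  then have "(y-x) * h t \<ge> (y-x) * ((1-u) * h x + u * h y)"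
    using assms by (intro mult_left_mono) auto
  also have "(y-x) * ((1-u) * h x + u * h y) = (y-x) * h x - (u * (y-x)) * h x + (u*(y-x)) * h y"
    by (simp add: algebra_simps)
  also have "\<dots> = (y-t) * h x + (t-x) * h y" unfolding ux by (simp add: algebra_simps)
  finally show ?thesis by (simp add: algebra_simps)
qed

theorem claim4:
  fixes n :: nat and a b :: real and f :: "real \<Rightarrow> real"
  assumes n: "n \<ge> 2"
    and a: "a > 0" and b: "b > 0"
    and cont: "continuous_on {-a..b} f"
    and nonneg: "\<And>t. t \<in> {-a..b} \<Longrightarrow> f t \<ge> 0"
    and pos: "\<And>t. t \<in> {-a<..<b} \<Longrightarrow> f t > 0"
    and conc: "concave_on {-a..b} (\<lambda>t. f t powr (1 / (real n - 1)))"
    and bary: "integral {-a..b} (\<lambda>t. t * f t) = 0"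
  shows "integral {0..b} f / integral {-a..0} f \<le> (1 + 1 / real n) ^ n - 1 \<and>
         (integral {0..b} f / integral {-a..0} f = (1 + 1 / real n) ^ n - 1 \<longleftrightarrow>
         ((\<exists>c d. \<forall>t\<in>{-a..b}. f t powr (1 / (real n - 1)) = c * t + d)
          \<and> f (-a) powr (1 / (real n - 1)) = 0))"
proof -
  obtain m where nm: "n = Suc m" using n by (cases n) auto
  have m1: "m \<ge> 1" using n nm by simp
  have rn: "real n - 1 = real m" using nm by simp
  define h where "h = (\<lambda>t. f t powr (1 / real m))"
  have conc': "concave_on {-a..b} h" using conc unfolding h_def rn .
  have hnn: "h t \<ge> 0" for t unfolding h_def by simp
  have inv: "(y^m) powr (1 / real m) = y" if "y \<ge> 0" for y
  proof (cases "y = 0")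
    case True then show ?thesis using m1 by simp
  next
    case False
    then have "y > 0" using that by simp
    then have "(y^m) powr (1 / real m) = (y powr real m) powr (1 / real m)"
      by (simp add: powr_realpow)
    also have "\<dots> = y" using m1 \<open>y > 0\<close> by (simp add: powr_powr)
    finally show ?thesis .
  qed
  have fh: "f t = h t ^ m" if "t \<in> {-a..b}" for t
  proof (cases "f t = 0")
    case True then show ?thesis using m1 by (simp add: h_def)
  next
    case False
    then have "f t > 0" using nonneg[OF that] by simp
    then have "h t ^ m = (f t powr (1 / real m)) powr real m"
      unfolding h_def by (simp add: powr_realpow)
    also have "\<dots> = f t" using m1 \<open>f t > 0\<close> by (simp add: powr_powr)
    finally show ?thesis by simp
  qed
  have fc: "continuous_on {x..y} f" if "-a \<le> x" "y \<le> b" for x y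
    by (rule continuous_on_subset[OF cont]) (use that in auto)
  have fI: "(f has_integral integral {x..y} f) {x..y}" if "-a \<le> x" "y \<le> b" for x y
    using integrable_continuous_interval[OF fc[OF that]] by (simp add: has_integral_integral)
  have tfc: "continuous_on {x..y} (\<lambda>t. t * f t)" if "-a \<le> x" "y \<le> b" for x y
    by (intro continuous_intros fc that)
  have tfI: "((\<lambda>t. t * f t) has_integral integral {x..y} (\<lambda>t. t * f t)) {x..y}" if "-a \<le> x" "y \<le> b" for x y
    using integrable_continuous_interval[OF tfc[OF that]] by (simp add: has_integral_integral)
  define V where "V = integral {-a..0} f"
  define W where "W = integral {0..b} f"
  have Vpos: "V > 0"
  proof -
    have "V \<ge> 0" unfolding V_def by (rule has_integral_nonneg[OF fI]) (use a b nonneg in auto)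
    moreover have "V \<noteq> 0"
    proof
      assume "V = 0"
      then have "f (-a/2) = 0"
        using zero_lemma[of "-a" 0 f "-a/2"] fc[of "-a" 0] fI[of "-a" 0] nonneg a b by (auto simp: V_def)
      moreover have "f (-a/2) > 0" using pos a b by auto
      ultimately show False by simp
    qed
    ultimately show ?thesis by simp
  qed
  have Wpos: "W > 0"
  proof -
    have "W \<ge> 0" unfolding W_def by (rule has_integral_nonneg[OF fI]) (use a b nonneg in auto)
    moreover have "W \<noteq> 0"
    proof
      assume "W = 0"
      then have "f (b/2) = 0"
        using zero_lemma[of 0 b f "b/2"] fc[of 0 b] fI[of 0 b] nonneg a b by (auto simp: W_def)
      moreover have "f (b/2) > 0" using pos a b by auto
      ultimately show False by simp
    qed
    ultimately show ?thesis by simp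
  qed
  define H where "H = h 0"
  have Hpos: "H > 0" using pos[of 0] a b by (simp add: H_def h_def)
  define \<alpha> where "\<alpha> = real n * V / H^m"
  have \<alpha>pos: "\<alpha> > 0" using Vpos Hpos nm by (simp add: \<alpha>_def)
  define k where "k = H / \<alpha>"
  have kpos: "k > 0" using Hpos \<alpha>pos by (simp add: k_def)
  have kH: "k * \<alpha> = H" using \<alpha>pos by (simp add: k_def)
  define ll where "ll = (\<lambda>t. k * (t + \<alpha>))"
  define g where "g = (\<lambda>t. k^m * (t + \<alpha>)^m)"
  have gll: "g t = ll t ^ m" for t by (simp add: g_def ll_def power_mult_distrib)
  have llnn: "ll t \<ge> 0" if "t \<ge> -\<alpha>" for t using that kpos by (simp add: ll_def)
  have gnn: "g t \<ge> 0" if "t \<ge> -\<alpha>" for t using that kpos by (simp add: g_def)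
  have ll0: "ll 0 = h 0" using kH by (simp add: ll_def H_def)
  define GI where "GI = (\<lambda>x y. k^m * (((y+\<alpha>)^n - (x+\<alpha>)^n) / real n))"
  define Gt where "Gt = (\<lambda>x. (x+\<alpha>)^Suc n / real (Suc n) - \<alpha>*(x+\<alpha>)^n/real n)"
  define TG where "TG = (\<lambda>x y. k^m * (Gt y - Gt x))"
  have gI: "(g has_integral GI x y) {x..y}" if "x \<le> y" for x y
    using has_integral_mult_right[OF intp[OF that, of \<alpha> m], of "k^m"]
    unfolding GI_def g_def nm .
  have tgI: "((\<lambda>t. t * g t) has_integral TG x y) {x..y}" if "x \<le> y" for x y
  proof -
    have "(\<lambda>t. t * g t) = (\<lambda>t. k^m * (t * (t+\<alpha>)^m))" by (auto simp: g_def fun_eq_iff ac_simps)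
    then show ?thesis
      using has_integral_mult_right[OF intpt[OF that, of \<alpha> m], of "k^m"]
      unfolding TG_def Gt_def nm by simp
  qed
  have GItel: "GI x y + GI y z = GI x z" for x y z by (simp add: GI_def algebra_simps add_divide_distrib[symmetric])
  have TGtel: "TG x y + TG y z = TG x z" for x y z by (simp add: TG_def field_simps)
  have gV: "GI (-\<alpha>) 0 = V"
  proof -
    have "GI (-\<alpha>) 0 = k^m * \<alpha>^m * \<alpha> / real n" using nm by (simp add: GI_def)
    also have "k^m * \<alpha>^m = H^m" using kH by (metis power_mult_distrib)
    finally show ?thesis using Hpos nm by (simp add: \<alpha>_def)
  qed
  define Q where "Q = \<alpha>^n + real n * W / k^m"
  have Qgt: "Q > \<alpha>^n" using Wpos kpos nm by (simp add: Q_def)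
  define L where "L = root n Q"
  have Qpos: "Q > 0" using Qgt \<alpha>pos by (meson less_trans zero_less_power)
  have Lpow: "L^n = Q" unfolding L_def using nm Qpos
    by (intro real_root_pow_pos2) auto
  have Lnn: "L \<ge> 0" unfolding L_def using Qpos by (simp add: real_root_ge_zero)
  have \<alpha>L: "\<alpha> < L" using power_less_imp_less_base[of \<alpha> n L] Lpow Qgt Lnn by simp
  define \<beta> where "\<beta> = L - \<alpha>"
  have \<beta>pos: "\<beta> > 0" using \<alpha>L by (simp add: \<beta>_def)
  have gW: "GI 0 \<beta> = W"
  proof -
    have "GI 0 \<beta> = k^m * ((L^n - \<alpha>^n) / real n)" by (simp add: GI_def \<beta>_def)
    also have "\<dots> = W" unfolding Lpow Q_def using kpos nm by simp
    finally show ?thesis .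
  qed
  have phi: "(y - x) * (h t - ll t) \<ge> (y-t)*(h x - ll x) + (t-x)*(h y - ll y)"
    if "x \<in> {-a..b}" "y \<in> {-a..b}" "x \<le> t" "t \<le> y" "x < y" for x y t
    using conc_aff[OF conc' that, of k "k*\<alpha>"] by (simp add: ll_def algebra_simps)
  have \<alpha>a: "a \<le> \<alpha>"
  proof (rule ccontr)
    assume "\<not> a \<le> \<alpha>"
    then have lt: "\<alpha> < a" by simp
    have ge: "g t \<le> f t" if "t \<in> {-\<alpha>..0}" for t
    proof -
      have "\<alpha> * (h t - ll t) \<ge> (0-t)*(h (-\<alpha>) - ll (-\<alpha>)) + (t+\<alpha>)*(h 0 - ll 0)"
        using phi[of "-\<alpha>" 0 t] that lt \<alpha>pos b by simp
      moreover have "(0-t)*(h (-\<alpha>) - ll (-\<alpha>)) \<ge> 0" using that hnn[of "-\<alpha>"] by (simp add: ll_def mult_nonpos_nonneg)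
      ultimately have "\<alpha> * (h t - ll t) \<ge> 0" using ll0 by simp
      then have "h t - ll t \<ge> 0" using \<alpha>pos by (simp add: zero_le_mult_iff)
      then have "h t \<ge> ll t" by simp
      then have "ll t ^ m \<le> h t ^ m" using llnn[of t] that by (intro power_mono) auto
      then show ?thesis using fh[of t] gll[of t] that lt a b by auto
    qed
    have "GI (-\<alpha>) 0 \<le> integral {-\<alpha>..0} f"
      using has_integral_le[OF gI fI[of "-\<alpha>" 0]] ge lt b \<alpha>pos by auto
    moreover have "integral {-a..-\<alpha>} f + integral {-\<alpha>..0} f = V"
      unfolding V_def using lt \<alpha>pos a b
      using Henstock_Kurzweil_Integration.integral_combine[where a="-a" and c="-\<alpha>" and b=0 and f=f] integrable_continuous_interval[OF fc[of "-a" 0]] by auto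
    ultimately have le0: "integral {-a..-\<alpha>} f \<le> 0" using gV by simp
    have "integral {-a..-\<alpha>} f \<ge> 0"
      by (rule has_integral_nonneg[OF fI]) (use lt \<alpha>pos b nonneg in auto)
    with le0 have "(f has_integral 0) {-a..-\<alpha>}" using fI[of "-a" "-\<alpha>"] lt \<alpha>pos b by auto
    then have "f (-(a+\<alpha>)/2) = 0"
      using zero_lemma[of "-a" "-\<alpha>" f "-(a+\<alpha>)/2"] fc[of "-a" "-\<alpha>"] nonneg lt \<alpha>pos b by auto
    moreover have "f (-(a+\<alpha>)/2) > 0" using pos lt \<alpha>pos b by auto
    ultimately show False by simp
  qed
  define S where "S = {x\<in>{-a..0}. ll x \<le> h x}"
  define c where "c = Inf S"
  have S0: "0 \<in> S" using a b ll0 by (simp add: S_def)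
  have Sbdd: "bdd_below S" by (rule bdd_belowI[of _ "-a"]) (auto simp: S_def)
  have cle0: "c \<le> 0" unfolding c_def using S0 Sbdd by (rule cInf_lower)
  have cge: "-a \<le> c" unfolding c_def using S0 by (intro cInf_greatest) (auto simp: S_def)
  have above: "ll t \<le> h t" if "t \<in> {-a..0}" "c < t" for t
  proof -
    obtain s where s: "s \<in> S" "s < t" using \<open>c < t\<close> S0 Sbdd cInf_less_iff[of S t] unfolding c_def
      by blast
    have "(0 - s) * (h t - ll t) \<ge> (0-t)*(h s - ll s) + (t-s)*(h 0 - ll 0)"
      using phi[of s 0 t] that s a b by (auto simp: S_def)
    moreover have "(0-t)*(h s - ll s) \<ge> 0" using that s by (intro mult_nonneg_nonneg) (auto simp: S_def)
    ultimately have "(0 - s) * (h t - ll t) \<ge> 0" using ll0 by simp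
    moreover have "0 - s > 0" using s that by auto
    ultimately have "h t - ll t \<ge> 0" by (simp add: zero_le_mult_iff del: diff_0)
    then show ?thesis by simp
  qed
  have below: "h t < ll t" if "t \<in> {-a..0}" "t < c" for t
  proof (rule ccontr)
    assume "\<not> h t < ll t"
    then have "t \<in> S" using that by (auto simp: S_def)
    then have "c \<le> t" unfolding c_def using Sbdd by (rule cInf_lower)
    with that show False by simp
  qed
  have fleg: "f t \<le> g t" if "t \<in> {-a..b}" "h t \<le> ll t" for t
  proof -
    have "h t ^ m \<le> ll t ^ m" using that hnn[of t] by (intro power_mono) auto
    then show ?thesis using fh[OF that(1)] gll[of t] by simp
  qed
  have gelf: "g t \<le> f t" if "t \<in> {-a..b}" "ll t \<le> h t" "-\<alpha> \<le> t" for t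
  proof -
    have "ll t ^ m \<le> h t ^ m" using that llnn[of t] by (intro power_mono) auto
    then show ?thesis using fh[OF that(1)] gll[of t] by simp
  qed
  have fltg: "f t < g t" if "t \<in> {-a..b}" "h t < ll t" for t
  proof -
    have "h t ^ m < ll t ^ m" using that hnn[of t] m1 by (intro power_strict_mono) auto
    then show ?thesis using fh[OF that(1)] gll[of t] by simp
  qed
  have x0: "\<exists>x0. -a \<le> x0 \<and> x0 < 0 \<and> ll x0 \<le> h x0"
  proof (cases "c < 0")
    case True
    obtain s where s: "s \<in> S" "s < 0" using True S0 Sbdd cInf_less_iff[of S 0] unfolding c_def
      by blast
    then show ?thesis by (auto simp: S_def)
  next
    case False
    then have c0: "c = 0" using cle0 by simp
    have gf: "f t \<le> g t" if "t \<in> {-a..0}" for t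
    proof (cases "t = 0")
      case True then show ?thesis using fleg[of 0] ll0 a b by simp
    next
      case False
      then show ?thesis using below[of t] that c0 fleg[of t] b by auto
    qed
    have I1: "((\<lambda>t. g t - f t) has_integral (GI (-a) 0 - V)) {-a..0}"
      unfolding V_def using a b by (intro has_integral_diff gI fI) auto
    have "0 \<le> GI (-a) 0 - V" by (rule has_integral_nonneg[OF I1]) (use gf in auto)
    moreover have "GI (-\<alpha>) (-a) \<ge> 0" using \<alpha>a kpos nm by (simp add: GI_def)
    moreover have "GI (-\<alpha>) (-a) + GI (-a) 0 = V" using GItel gV by metis
    ultimately have "GI (-a) 0 - V = 0" by simp
    with I1 have "((\<lambda>t. g t - f t) has_integral 0) {-a..0}" by simp
    have cg: "continuous_on {-a..0} (\<lambda>t. g t - f t)"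
      unfolding g_def using b by (intro continuous_intros fc) auto
    have eq0: "g (-a) - f (-a) = 0"
      using zero_lemma[OF _ cg _ \<open>((\<lambda>t. g t - f t) has_integral 0) {-a..0}\<close>, of "-a"] a gf by auto
    have "f (-a) < g (-a)" using fltg[of "-a"] below[of "-a"] c0 a b by auto
    with eq0 show ?thesis by simp
  qed
  then obtain x0 where x0: "-a \<le> x0" "x0 < 0" "ll x0 \<le> h x0" by blast
  have right: "h y \<le> ll y" if "y \<in> {0..b}" for y
  proof (cases "y = 0")
    case True then show ?thesis using ll0 by simp
  next
    case False
    then have y: "0 < y" "y \<le> b" using that by auto
    have "(y - x0) * (h 0 - ll 0) \<ge> (y-0)*(h x0 - ll x0) + (0-x0)*(h y - ll y)"
      using phi[of x0 y 0] x0 y b by auto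
    moreover have "(y-0)*(h x0 - ll x0) \<ge> 0" using y x0 by simp
    ultimately have "(0-x0)*(h y - ll y) \<le> 0" using ll0 by simp
    then have "h y - ll y \<le> 0" using x0 by (simp add: mult_le_0_iff del: diff_0)
    then show ?thesis by simp
  qed
  have fgR: "f t \<le> g t" if "t \<in> {0..b}" for t using fleg[of t] right[OF that] that a by auto
  have \<beta>b: "\<beta> \<le> b"
  proof (rule ccontr)
    assume "\<not> \<beta> \<le> b"
    then have lt: "b < \<beta>" by simp
    have I1: "((\<lambda>t. g t - f t) has_integral (GI 0 b - W)) {0..b}"
      unfolding W_def using a b by (intro has_integral_diff gI fI) auto
    have "0 \<le> GI 0 b - W" by (rule has_integral_nonneg[OF I1]) (use fgR in auto)
    moreover have "(b+\<alpha>)^n < (\<beta>+\<alpha>)^n" using lt b \<alpha>pos nm by (intro power_strict_mono) auto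
    then have "GI 0 b < GI 0 \<beta>" using kpos nm by (simp add: GI_def divide_strict_right_mono)
    ultimately show False using gW by simp
  qed
  define FF where "FF = (\<lambda>x y. integral {x..y} f)"
  define TF where "TF = (\<lambda>x y. integral {x..y} (\<lambda>t. t * f t))"
  have Fcomb: "FF x y + FF y z = FF x z" if "-a \<le> x" "x \<le> y" "y \<le> z" "z \<le> b" for x y z
    unfolding FF_def
    using Henstock_Kurzweil_Integration.integral_combine[where a=x and c=y and b=z and f=f]
      integrable_continuous_interval[OF fc[of x z]] that by auto
  have TFcomb: "TF x y + TF y z = TF x z" if "-a \<le> x" "x \<le> y" "y \<le> z" "z \<le> b" for x y z
    unfolding TF_def
    using Henstock_Kurzweil_Integration.integral_combine[where a=x and c=y and b=z and f="\<lambda>t. t * f t"]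
      integrable_continuous_interval[OF tfc[of x z]] that by auto
  have comb4: "((\<lambda>t. c' * g t - t * g t - c' * f t + t * f t) has_integral
      (c' * GI x y - TG x y - c' * FF x y + TF x y)) {x..y}" if "-a \<le> x" "x \<le> y" "y \<le> b" for x y c'
    unfolding FF_def TF_def using that
    by (intro has_integral_add has_integral_diff has_integral_mult_right gI tgI fI tfI) auto
  define vL1 where "vL1 = c * GI (-a) 0 - TG (-a) 0 - c * V + TF (-a) 0"
  define vL2 where "vL2 = c * GI (-\<alpha>) (-a) - TG (-\<alpha>) (-a)"
  have hL1: "((\<lambda>t. (c - t) * (g t - f t)) has_integral vL1) {-a..0}"
  proof -
    have "(\<lambda>t. (c - t) * (g t - f t)) = (\<lambda>t. c * g t - t * g t - c * f t + t * f t)"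
      by (auto simp: fun_eq_iff algebra_simps)
    then show ?thesis using comb4[of "-a" 0 c] a b by (simp add: vL1_def V_def FF_def)
  qed
  have uL1: "0 \<le> (c - t) * (g t - f t)" if "t \<in> {-a..0}" for t
  proof -
    consider "c < t" | "t < c" | "t = c" by linarith
    then show ?thesis
    proof cases
      case 1
      then have "g t \<le> f t" using gelf[of t] above[OF that] that \<alpha>a b by auto
      then show ?thesis using 1 by (intro mult_nonpos_nonpos) auto
    next
      case 2
      then have "f t \<le> g t" using fleg[of t] below[OF that] that b by auto
      then show ?thesis using 2 by (intro mult_nonneg_nonneg) auto
    qed simp
  qed
  have hL2: "((\<lambda>t. (c - t) * g t) has_integral vL2) {-\<alpha>..-a}"
  proof -
    have "(\<lambda>t. (c - t) * g t) = (\<lambda>t. c * g t - t * g t)"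
      by (auto simp: fun_eq_iff algebra_simps)
    then show ?thesis unfolding vL2_def using \<alpha>a
      by (simp add: has_integral_diff has_integral_mult_right gI tgI)
  qed
  have uL2: "0 \<le> (c - t) * g t" if "t \<in> {-\<alpha>..-a}" for t
    using that cge gnn[of t] by (intro mult_nonneg_nonneg) auto
  have vL1nn: "vL1 \<ge> 0" using has_integral_nonneg[OF hL1] uL1 by blast
  have vL2nn: "vL2 \<ge> 0" using has_integral_nonneg[OF hL2] uL2 by blast
  have DL: "TF (-a) 0 - TG (-\<alpha>) 0 = vL1 + vL2"
  proof -
    have "GI (-\<alpha>) (-a) + GI (-a) 0 = V" using GItel gV by metis
    moreover have "TG (-\<alpha>) (-a) + TG (-a) 0 = TG (-\<alpha>) 0" using TGtel by metis
    moreover have "vL1 + vL2 = c*(GI (-\<alpha>) (-a) + GI (-a) 0) - (TG (-\<alpha>) (-a) + TG (-a) 0) - c*V + TF (-a) 0"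
      unfolding vL1_def vL2_def by (simp add: algebra_simps)
    ultimately show ?thesis by simp
  qed
  define vR1 where "vR1 = \<beta> * GI 0 \<beta> - TG 0 \<beta> - \<beta> * FF 0 \<beta> + TF 0 \<beta>"
  define vR2 where "vR2 = TF \<beta> b - \<beta> * FF \<beta> b"
  have hR1: "((\<lambda>t. (\<beta> - t) * (g t - f t)) has_integral vR1) {0..\<beta>}"
  proof -
    have "(\<lambda>t. (\<beta> - t) * (g t - f t)) = (\<lambda>t. \<beta> * g t - t * g t - \<beta> * f t + t * f t)"
      by (auto simp: fun_eq_iff algebra_simps)
    then show ?thesis using comb4[of 0 \<beta> \<beta>] a \<beta>pos \<beta>b by (simp add: vR1_def)
  qed
  have uR1: "0 \<le> (\<beta> - t) * (g t - f t)" if "t \<in> {0..\<beta>}" for t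
    using that fgR[of t] \<beta>b by (intro mult_nonneg_nonneg) auto
  have hR2: "((\<lambda>t. (t - \<beta>) * f t) has_integral vR2) {\<beta>..b}"
  proof -
    have "(\<lambda>t. (t - \<beta>) * f t) = (\<lambda>t. t * f t - \<beta> * f t)"
      by (auto simp: fun_eq_iff algebra_simps)
    then show ?thesis unfolding vR2_def FF_def TF_def using \<beta>b \<beta>pos a
      by (simp add: has_integral_diff has_integral_mult_right fI tfI)
  qed
  have uR2: "0 \<le> (t - \<beta>) * f t" if "t \<in> {\<beta>..b}" for t
    using that nonneg[of t] \<beta>pos a by (intro mult_nonneg_nonneg) auto
  have vR1nn: "vR1 \<ge> 0" using has_integral_nonneg[OF hR1] uR1 by blast
  have vR2nn: "vR2 \<ge> 0" using has_integral_nonneg[OF hR2] uR2 by blast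
  have DR: "TF 0 b - TG 0 \<beta> = vR1 + vR2"
  proof -
    have "FF 0 \<beta> + FF \<beta> b = W" using Fcomb[of 0 \<beta> b] \<beta>pos \<beta>b a by (simp add: W_def FF_def)
    moreover have "TF 0 \<beta> + TF \<beta> b = TF 0 b" using TFcomb[of 0 \<beta> b] \<beta>pos \<beta>b a by simp
    moreover have "vR1 + vR2 = \<beta> * GI 0 \<beta> - TG 0 \<beta> - \<beta> * (FF 0 \<beta> + FF \<beta> b) + (TF 0 \<beta> + TF \<beta> b)"
      unfolding vR1_def vR2_def by (simp add: algebra_simps)
    ultimately show ?thesis using gW by simp
  qed
  have bary': "TF (-a) 0 + TF 0 b = 0" using TFcomb[of "-a" 0 b] a b bary by (simp add: TF_def)
  have TGall: "TG (-\<alpha>) 0 + TG 0 \<beta> = TG (-\<alpha>) \<beta>" using TGtel by metis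
  have TGval: "TG (-\<alpha>) \<beta> = k^m * (L^Suc n / real (Suc n) - \<alpha> * L^n / real n)"
    using nm by (simp add: TG_def Gt_def \<beta>_def)
  have Msum: "TG (-\<alpha>) \<beta> + (vL1 + vL2 + vR1 + vR2) = 0"
    using DL DR bary' TGall by linarith
  have Lpos: "L > 0" using \<alpha>L \<alpha>pos by simp
  have ratio: "W / V = (L / \<alpha>)^n - 1"
  proof -
    have "W / V = GI 0 \<beta> / GI (-\<alpha>) 0" using gW gV by simp
    also have "\<dots> = (L^n - \<alpha>^n) / \<alpha>^n" using kpos nm by (simp add: GI_def \<beta>_def)
    also have "\<dots> = (L / \<alpha>)^n - 1" using \<alpha>pos by (simp add: power_divide diff_divide_distrib)
    finally show ?thesis .
  qed
  have key: "TG (-\<alpha>) \<beta> = k^m * L^n * (L / real (Suc n) - \<alpha> / real n)"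
    unfolding TGval by (simp add: algebra_simps)
  have Lle: "L / \<alpha> \<le> 1 + 1 / real n"
  proof -
    have "TG (-\<alpha>) \<beta> \<le> 0" using Msum vL1nn vL2nn vR1nn vR2nn by linarith
    moreover have "k^m * L^n > 0" using kpos Lpos by simp
    ultimately have "L / real (Suc n) - \<alpha> / real n \<le> 0" unfolding key
      using mult_le_cancel_left_pos[of "k^m * L^n" "L / real (Suc n) - \<alpha> / real n" 0] by simp
    then have "L / real (Suc n) \<le> \<alpha> / real n" by simp
    then have "L * real n \<le> \<alpha> * real (Suc n)" using nm
      by (simp add: divide_simps del: of_nat_Suc) 
    then show ?thesis using \<alpha>pos nm by (simp add: field_simps)
  qed
  have part1: "W / V \<le> (1 + 1 / real n) ^ n - 1"
    unfolding ratio using Lle Lpos \<alpha>pos by (simp add: power_mono)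
  have fwd: "(\<exists>c d. \<forall>t\<in>{-a..b}. h t = c * t + d) \<and> h (-a) = 0"
    if eq: "W / V = (1 + 1 / real n) ^ n - 1"
  proof -
    have "(L / \<alpha>)^n = (1 + 1 / real n)^n" using eq ratio by linarith
    then have La: "L / \<alpha> = 1 + 1 / real n"
      by (rule power_eq_imp_eq_base) (use Lpos \<alpha>pos nm in auto)
    then have "L = \<alpha> * (1 + 1 / real n)" using \<alpha>pos by (simp add: field_simps)
    then have "L / real (Suc n) - \<alpha> / real n = 0" using nm by (simp add: field_simps)
    then have "TG (-\<alpha>) \<beta> = 0" unfolding key by simp
    then have z: "vL1 = 0" "vL2 = 0" "vR1 = 0" "vR2 = 0"
      using Msum vL1nn vL2nn vR1nn vR2nn by linarith+
    have \<alpha>eq: "\<alpha> = a"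
    proof (rule ccontr)
      assume "\<alpha> \<noteq> a"
      then have lt: "a < \<alpha>" using \<alpha>a by simp
      define t where "t = -(\<alpha>+a)/2"
      have cg: "continuous_on {-\<alpha>..-a} (\<lambda>t. (c - t) * g t)"
        unfolding g_def by (intro continuous_intros)
      have z0: "(c - t) * g t = 0"
        using zero_lemma[OF _ cg _ hL2[unfolded z], of t] uL2 lt by (auto simp: t_def)
      moreover have "t + \<alpha> > 0" using lt by (simp add: t_def field_simps)
      then have "g t > 0" using kpos by (simp add: g_def)
      moreover have "c - t > 0" using lt cge by (simp add: t_def field_simps)
      ultimately have "(c - t) * g t > 0" by simp
      with z0 show False by linarith
    qed
    have \<beta>eq: "\<beta> = b"
    proof (rule ccontr)
      assume "\<beta> \<noteq> b"
      then have lt: "\<beta> < b" using \<beta>b by simp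
      define t where "t = (\<beta>+b)/2"
      have cg: "continuous_on {\<beta>..b} (\<lambda>t. (t - \<beta>) * f t)"
        using \<beta>pos a by (intro continuous_intros fc) auto
      have "(t - \<beta>) * f t = 0"
        using zero_lemma[OF _ cg _ hR2[unfolded z], of t] uR2 lt by (auto simp: t_def)
      moreover have "(t - \<beta>) * f t > 0" using lt \<beta>pos pos[of t] a
        by (intro mult_pos_pos) (auto simp: t_def)
      ultimately show False by linarith
    qed
    have fgL: "f t = g t" if "t \<in> {-a..0}" for t
    proof -
      have cg: "continuous_on {-a..0} (\<lambda>t. (c - t) * (g t - f t))"
        unfolding g_def using b by (intro continuous_intros fc) auto
      have ne: "g t = f t" if "t \<in> {-a..0}" "t \<noteq> c" for t
      proof -
        have "(c - t) * (g t - f t) = 0"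
          using zero_lemma[OF _ cg _ hL1[unfolded z], of t] uL1 that a by auto
        then show ?thesis using that by simp
      qed
      have sq: "((\<lambda>t. (g t - f t)^2) has_integral 0) {-a..0}"
        by (rule has_integral_spike_finite[of "{c}" _ _ "\<lambda>t. 0"]) (use ne in auto)
      have cg2: "continuous_on {-a..0} (\<lambda>t. (g t - f t)^2)"
        unfolding g_def using b by (intro continuous_intros fc) auto
      have "(g t - f t)^2 = 0"
        using zero_lemma[OF _ cg2 _ sq, of t] that a by auto
      then show ?thesis by simp
    qed
    have fgR': "f t = g t" if "t \<in> {0..b}" for t
    proof -
      have cg: "continuous_on {0..\<beta>} (\<lambda>t. (\<beta> - t) * (g t - f t))"
        unfolding g_def using \<beta>b a by (intro continuous_intros fc) auto
      have ne: "g t = f t" if "t \<in> {0..\<beta>}" "t \<noteq> \<beta>" for t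
      proof -
        have "(\<beta> - t) * (g t - f t) = 0"
          using zero_lemma[OF _ cg _ hR1[unfolded z], of t] uR1 that \<beta>pos by auto
        then show ?thesis using that by simp
      qed
      have sq: "((\<lambda>t. (g t - f t)^2) has_integral 0) {0..\<beta>}"
        by (rule has_integral_spike_finite[of "{\<beta>}" _ _ "\<lambda>t. 0"]) (use ne in auto)
      have cg2: "continuous_on {0..\<beta>} (\<lambda>t. (g t - f t)^2)"
        unfolding g_def using \<beta>b a by (intro continuous_intros fc) auto
      have "(g t - f t)^2 = 0"
        using zero_lemma[OF _ cg2 _ sq, of t] that \<beta>pos \<beta>eq by auto
      then show ?thesis by simp
    qed
    have hl: "h t = ll t" if "t \<in> {-a..b}" for t
    proof -
      have "f t = ll t ^ m" using fgL[of t] fgR'[of t] that gll[of t] by (cases "t \<le> 0") auto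
      then have "h t = (ll t ^ m) powr (1 / real m)" by (simp add: h_def)
      also have "\<dots> = ll t" using inv llnn[of t] that \<alpha>eq by auto
      finally show ?thesis .
    qed
    show ?thesis
    proof
      show "\<exists>c d. \<forall>t\<in>{-a..b}. h t = c * t + d"
        using hl by (intro exI[of _ k] exI[of _ "k * \<alpha>"]) (auto simp: ll_def algebra_simps)
      show "h (-a) = 0" using hl[of "-a"] a b \<alpha>eq by (simp add: ll_def)
    qed
  qed
  have bwd: "W / V = (1 + 1 / real n) ^ n - 1"
    if ex: "\<exists>c d. \<forall>t\<in>{-a..b}. h t = c * t + d" and ha: "h (-a) = 0"
  proof -
    obtain C D where CD: "\<And>t. t \<in> {-a..b} \<Longrightarrow> h t = C * t + D" using ex by blast
    have D: "D = C * a" using CD[of "-a"] ha a b by simp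
    have "h 0 = D" using CD[of 0] a b by simp
    then have Dpos: "D > 0" using Hpos by (simp add: H_def)
    then have Cpos: "C > 0" using D a by (simp add: zero_less_mult_iff)
    have fC: "f t = C^m * (t + a)^m" if "t \<in> {-a..b}" for t
    proof -
      have "h t = C * (t + a)" using CD[OF that] D by (simp add: algebra_simps)
      then show ?thesis using fh[OF that] by (simp add: power_mult_distrib)
    qed
    have fint: "integral {x..y} f = C^m * (((y+a)^n - (x+a)^n) / real n)"
      if "-a \<le> x" "x \<le> y" "y \<le> b" for x y
    proof -
      have "((\<lambda>t. C^m * (t + a)^m) has_integral C^m * (((y+a)^n - (x+a)^n) / real n)) {x..y}"
        using has_integral_mult_right[OF intp[OF that(2), of a m], of "C^m"] nm by simp
      moreover have "((\<lambda>t. C^m * (t + a)^m) has_integral C^m * (((y+a)^n - (x+a)^n) / real n)) {x..y}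
         = (f has_integral C^m * (((y+a)^n - (x+a)^n) / real n)) {x..y}"
        by (rule has_integral_cong) (use fC that in auto)
      ultimately show ?thesis by (simp add: integral_unique)
    qed
    have tfint: "integral {-a..b} (\<lambda>t. t * f t) =
        C^m * ((b+a)^Suc n / real (Suc n) - a * (b+a)^n / real n)"
    proof -
      have "((\<lambda>t. C^m * (t * (t + a)^m)) has_integral
          C^m * ((b+a)^Suc n / real (Suc n) - a * (b+a)^n / real n)) {-a..b}"
        using has_integral_mult_right[OF intpt[of "-a" b a m], of "C^m"] nm a b by simp
      moreover have "((\<lambda>t. C^m * (t * (t + a)^m)) has_integral
          C^m * ((b+a)^Suc n / real (Suc n) - a * (b+a)^n / real n)) {-a..b} =
          ((\<lambda>t. t * f t) has_integral
          C^m * ((b+a)^Suc n / real (Suc n) - a * (b+a)^n / real n)) {-a..b}"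
        by (rule has_integral_cong) (use fC in auto)
      ultimately show ?thesis by (simp add: integral_unique)
    qed
    have "C^m * (b+a)^n * ((b+a) / real (Suc n) - a / real n) = 0"
      using tfint bary by (simp add: algebra_simps)
    moreover have "C^m * (b+a)^n > 0" using Cpos a b by simp
    ultimately have "(b+a) / real (Suc n) - a / real n = 0" using Cpos a b by auto
    then have "(b+a) / real (Suc n) = a / real n" by simp
    then have "(b+a) * real n = a * real (Suc n)" using nm
      by (simp add: divide_simps del: of_nat_Suc)
    then have bn: "b * real n = a" by (simp add: algebra_simps)
    have ba: "(b+a) / a = 1 + 1 / real n"
    proof -
      have "(b+a) / a = 1 + b / a" using a by (simp add: field_simps)
      also have "b / a = 1 / real n" using bn a nm by (simp add: field_simps)
      finally show ?thesis .
    qed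
    have "W / V = (C^m * (((b+a)^n - a^n) / real n)) / (C^m * ((a^n - 0) / real n))"
      unfolding W_def V_def using fint[of 0 b] fint[of "-a" 0] a b by (simp add: add.commute)
    also have "\<dots> = ((b+a)^n - a^n) / a^n" using Cpos a nm by simp
    also have "\<dots> = ((b+a)/a)^n - 1" using a by (simp add: power_divide diff_divide_distrib)
    finally show ?thesis using ba by simp
  qed
  have conv1: "integral {0..b} f / integral {-a..0} f = W / V" by (simp add: W_def V_def)
  have conv2: "f t powr (1 / (real n - 1)) = h t" for t by (simp add: h_def rn)
  have iff: "W / V = (1 + 1 / real n) ^ n - 1 \<longleftrightarrow>
      ((\<exists>c d. \<forall>t\<in>{-a..b}. h t = c * t + d) \<and> h (-a) = 0)"
  proof
    assume "W / V = (1 + 1 / real n) ^ n - 1"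
    then show "(\<exists>c d. \<forall>t\<in>{-a..b}. h t = c * t + d) \<and> h (-a) = 0" by (rule fwd)
  next
    assume A: "(\<exists>c d. \<forall>t\<in>{-a..b}. h t = c * t + d) \<and> h (-a) = 0"
    show "W / V = (1 + 1 / real n) ^ n - 1" using bwd A by blast
  qed
  show ?thesis unfolding conv1 conv2 using part1 iff by (rule conjI)
qed

end
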